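(* Let $\lambda\in(\frac16,\frac56)$. There is a constant $C>0$ (depending only on $\lambda$) such that for every $n\ge0$ and all $x,y\in[0,1]$ with $x\notin\mathcal E$ and $\frac1{12}\ell_n(x)\le|x-y|\le\frac12\ell_n(x)$, $$|F^\lambda(x)-F^\lambda(y)|\le C(|m_n(x)|+1)|x-y|.$$
   Context: Construction: $F^\lambda_0\equiv0$ on $[0,1]$. Given $F^\lambda_n$ with its $4^n$ closed intervals of generation $n$ (covering $[0,1]$, disjoint interiors, $F^\lambda_n$ affine on each), on each interval $[a,b]$ of generation $n$, with $\ell=b-a$ and slope $m$, $F^\lambda_{n+1}$ coincides with $F^\lambda_n$ at $a,a+\ell/3,a+2\ell/3,b$, equals $F^\lambda_n(a+\ell/2)+\lambda\ell\sqrt{1+m^2}$ at $a+\ell/2$, and is affine on $[a,a+\ell/3],[a+\ell/3,a+\ell/2],[a+\ell/2,a+2\ell/3],[a+2\ell/3,b]$. $F^\lambda=\lim_nF^\lambda_n$ (finite for $\lambda\in(\frac16,\frac56)$). Dynamics: $T(x)=3x$ on $[0,\frac13)$, $6x-2$ on $[\frac13,\frac12)$, $4-6x$ on $[\frac12,\frac23)$, $3x-2$ on $[\frac23,1]$; $U(x)=0,1,2,3$ on these intervals respectively; $u_n(x)=U(T^nx)$; $\beta_{0,3}(x,n)=\#\{k<n:u_k(x)\in\{0,3\}\}$, $\beta_{1,2}(x,n)=\#\{k<n:u_k(x)\in\{1,2\}\}$; $\ell_n(x)=3^{-\beta_{0,3}(x,n)}6^{-\beta_{1,2}(x,n)}$.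 $\mathcal E$ is the set of $x$ whose digit sequence $(u_n(x))$ is eventually constantly $0$ or eventually constantly $3$; for $x\notin\mathcal E$, $m_n(x)$ is the slope of $F^\lambda_n$ at $x$. *)

theory Defs
  imports Complex_Main
begin

text \<open>A piece of generation n is a quadruple (a, b, F_n(a), F_n(b)); F_n is affine on [a,b].\<close>

definition refine :: "real \<Rightarrow> real \<times> real \<times> real \<times> real \<Rightarrow> (real \<times> real \<times> real \<times> real) list" where
  "refine lam p = (case p of (a, b, fa, fb) \<Rightarrow>
     let l = b - a; m = (fb - fa) / l;
         v1 = fa + m * l / 3; v2 = fa + 2 * m * l / 3;
         mid = fa + m * l / 2 + lam * l * sqrt (1 + m\<^sup>2)
     in [(a, a + l/3, fa, v1), (a + l/3, a + l/2, v1, mid),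
         (a + l/2, a + 2*l/3, mid, v2), (a + 2*l/3, b, v2, fb)])"

primrec pieces :: "real \<Rightarrow> nat \<Rightarrow> (real \<times> real \<times> real \<times> real) list" where
  "pieces lam 0 = [(0, 1, 0, 0)]"
| "pieces lam (Suc n) = concat (map (refine lam) (pieces lam n))"

definition piece_at :: "real \<Rightarrow> nat \<Rightarrow> real \<Rightarrow> (real \<times> real \<times> real \<times> real) option" where
  "piece_at lam n x = find (\<lambda>(a, b, _, _). a \<le> x \<and> x \<le> b) (pieces lam n)"

definition Fn :: "real \<Rightarrow> nat \<Rightarrow> real \<Rightarrow> real" where
  "Fn lam n x = (case piece_at lam n x of
      Some (a, b, fa, fb) \<Rightarrow> fa + (fb - fa) / (b - a) * (x - a)
    | None \<Rightarrow> 0)"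

definition slope_n :: "real \<Rightarrow> nat \<Rightarrow> real \<Rightarrow> real" where
  "slope_n lam n x = (case piece_at lam n x of
      Some (a, b, fa, fb) \<Rightarrow> (fb - fa) / (b - a)
    | None \<Rightarrow> 0)"

definition Flim :: "real \<Rightarrow> real \<Rightarrow> real" where
  "Flim lam x = lim (\<lambda>n. Fn lam n x)"

definition Tmap :: "real \<Rightarrow> real" where
  "Tmap x = (if x < 1/3 then 3 * x else if x < 1/2 then 6 * x - 2
             else if x < 2/3 then 4 - 6 * x else 3 * x - 2)"

definition Umap :: "real \<Rightarrow> nat" where
  "Umap x = (if x < 1/3 then 0 else if x < 1/2 then 1 else if x < 2/3 then 2 else 3)"

definition digit :: "nat \<Rightarrow> real \<Rightarrow> nat" where
  "digit n x = Umap ((Tmap ^^ n) x)"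

definition beta03 :: "real \<Rightarrow> nat \<Rightarrow> nat" where
  "beta03 x n = card {k. k < n \<and> digit k x \<in> {0, 3}}"

definition beta12 :: "real \<Rightarrow> nat \<Rightarrow> nat" where
  "beta12 x n = card {k. k < n \<and> digit k x \<in> {1, 2}}"

definition ell :: "nat \<Rightarrow> real \<Rightarrow> real" where
  "ell n x = (1/3) ^ beta03 x n * (1/6) ^ beta12 x n"

definition Eset :: "real set" where
  "Eset = {x. \<exists>N. (\<forall>k\<ge>N. digit k x = 0) \<or> (\<forall>k\<ge>N. digit k x = 3)}"

end

theory Submission
  imports Defs
begin

definition pA :: "real\<times>real\<times>real\<times>real \<Rightarrow> real" where "pA p = fst p"
definition pB :: "real\<times>real\<times>real\<times>real \<Rightarrow> real" where "pB p = fst (snd p)"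
definition pfa :: "real\<times>real\<times>real\<times>real \<Rightarrow> real" where "pfa p = fst (snd (snd p))"
definition pfb :: "real\<times>real\<times>real\<times>real \<Rightarrow> real" where "pfb p = snd (snd (snd p))"
definition pl where "pl p = pB p - pA p"
definition psl where "psl p = (pfb p - pfa p) / pl p"
definition Sq where "Sq p = sqrt (1 + (psl p)\<^sup>2)"
definition ps where "ps p = pl p * Sq p"
definition aff where "aff p z = pfa p + psl p * (z - pA p)"
definition inP where "inP p z = (pA p \<le> z \<and> z \<le> pB p)"
definition hat where "hat p z = (if z \<le> pA p + pl p/3 then 0 else if z \<le> pA p + pl p/2 then 6*(z - pA p - pl p/3)/pl p
   else if z \<le> pA p + 2*pl p/3 then 6*(pA p + 2*pl p/3 - z)/pl p else 0)"

lemma acc_simps[simp]: "pA (a,b,fa,fb) = a" "pB (a,b,fa,fb) = b" "pfa (a,b,fa,fb) = fa" "pfb (a,b,fa,fb) = fb"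
  by (simp_all add: pA_def pB_def pfa_def pfb_def)

definition "ch0 lam p = (pA p, pA p + pl p/3, pfa p, pfa p + psl p * pl p/3)"
definition "ch1 lam p = (pA p + pl p/3, pA p + pl p/2, pfa p + psl p * pl p/3, pfa p + psl p * pl p/2 + lam * pl p * Sq p)"
definition "ch2 lam p = (pA p + pl p/2, pA p + 2*pl p/3, pfa p + psl p * pl p/2 + lam * pl p * Sq p, pfa p + 2 * psl p * pl p/3)"
definition "ch3 lam p = (pA p + 2*pl p/3, pB p, pfa p + 2 * psl p * pl p/3, pfb p)"

lemma refine_eq: "refine lam p = [ch0 lam p, ch1 lam p, ch2 lam p, ch3 lam p]"
proof -
  obtain a b fa fb where p: "p = (a,b,fa,fb)" by (cases p) auto
  show ?thesis unfolding p refine_def ch0_def ch1_def ch2_def ch3_def pl_def psl_def Sq_def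
    by (simp only: Let_def prod.case acc_simps)
qed

lemma inP_eq: "inP p z = (case p of (a, b, _, _) \<Rightarrow> a \<le> z \<and> z \<le> b)"
  by (cases p) (simp add: inP_def)

lemma Fn_eq: "Fn lam n x = (case piece_at lam n x of Some p \<Rightarrow> aff p x | None \<Rightarrow> 0)"
  by (auto simp: Fn_def aff_def psl_def pl_def split: option.splits)

lemma slope_eq: "slope_n lam n x = (case piece_at lam n x of Some p \<Rightarrow> psl p | None \<Rightarrow> 0)"
  by (auto simp: slope_n_def psl_def pl_def split: option.splits)

lemma piece_at_eq: "piece_at lam n x = find (\<lambda>p. inP p x) (pieces lam n)"
  unfolding piece_at_def inP_eq by simp

lemma pB_eq: "pB p = pA p + pl p" by (simp add: pl_def)
lemma pfb_eq: "pl p \<noteq> 0 \<Longrightarrow> pfb p = pfa p + psl p * pl p" by (simp add: psl_def)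

lemma ch_acc[simp]:
  "pA (ch0 lam p) = pA p" "pB (ch0 lam p) = pA p + pl p/3" "pfa (ch0 lam p) = pfa p" "pfb (ch0 lam p) = pfa p + psl p * pl p/3"
  "pA (ch1 lam p) = pA p + pl p/3" "pB (ch1 lam p) = pA p + pl p/2" "pfa (ch1 lam p) = pfa p + psl p * pl p/3" "pfb (ch1 lam p) = pfa p + psl p * pl p/2 + lam * pl p * Sq p"
  "pA (ch2 lam p) = pA p + pl p/2" "pB (ch2 lam p) = pA p + 2*pl p/3" "pfa (ch2 lam p) = pfa p + psl p * pl p/2 + lam * pl p * Sq p" "pfb (ch2 lam p) = pfa p + 2 * psl p * pl p/3"
  "pA (ch3 lam p) = pA p + 2*pl p/3" "pB (ch3 lam p) = pB p" "pfa (ch3 lam p) = pfa p + 2 * psl p * pl p/3" "pfb (ch3 lam p) = pfb p"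
  by (simp_all add: ch0_def ch1_def ch2_def ch3_def)

lemma ch_pl[simp]: "pl (ch0 lam p) = pl p/3" "pl (ch1 lam p) = pl p/6" "pl (ch2 lam p) = pl p/6" "pl (ch3 lam p) = pl p/3"
  by (simp_all add: pl_def[of "ch0 lam p"] pl_def[of "ch1 lam p"] pl_def[of "ch2 lam p"] pl_def[of "ch3 lam p"]) (simp_all add: pl_def)

context fixes lam :: real and p assumes lp: "pl p > 0"
begin
lemma ch_psl[simp]: "psl (ch0 lam p) = psl p" "psl (ch1 lam p) = psl p + 6*lam*Sq p"
  "psl (ch2 lam p) = psl p - 6*lam*Sq p" "psl (ch3 lam p) = psl p"
  using lp by (simp_all add: psl_def[of "ch0 lam p"] psl_def[of "ch1 lam p"] psl_def[of "ch2 lam p"] psl_def[of "ch3 lam p"] pfb_eq field_simps)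

lemma ch_aff:
  "aff (ch0 lam p) z = aff p z" "aff (ch3 lam p) z = aff p z"
  "aff (ch1 lam p) z = aff p z + 6*lam*Sq p*(z - pA p - pl p/3)"
  "aff (ch2 lam p) z = aff p z + 6*lam*Sq p*(pA p + 2*pl p/3 - z)"
  using lp by (simp_all add: aff_def algebra_simps)

lemma child_aff: "c \<in> set (refine lam p) \<Longrightarrow> inP c z \<Longrightarrow> aff c z = aff p z + lam * ps p * hat p z"
proof -
  assume c: "c \<in> set (refine lam p)" and z: "inP c z"
  have ps: "lam * ps p * (6*w/pl p) = 6*lam*Sq p*w" for w using lp by (simp add: ps_def)
  from c consider "c = ch0 lam p" | "c = ch1 lam p" | "c = ch2 lam p" | "c = ch3 lam p" unfolding refine_eq by auto
  then show ?thesis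
  proof cases
    case 1 then show ?thesis using z lp by (auto simp: ch_aff inP_def hat_def)
  next
    case 4 then show ?thesis using z lp by (auto simp: ch_aff inP_def hat_def)
  next
    case 2
    show ?thesis
    proof (cases "z \<le> pA p + pl p/3")
      case True
      then have "z = pA p + pl p/3" using z 2 by (auto simp: inP_def)
      then show ?thesis using 2 by (simp add: ch_aff hat_def)
    next
      case False
      then show ?thesis using z 2 lp ps[of "z - pA p - pl p/3"] by (auto simp: ch_aff inP_def hat_def)
    qed
  next
    case 3
    show ?thesis
    proof (cases "z \<le> pA p + pl p/2")
      case True
      then have zz: "z = pA p + pl p/2" using z 3 by (auto simp: inP_def)
      have "hat p z = 6*(pA p + 2*pl p/3 - z)/pl p" using lp unfolding hat_def zz by (auto simp: field_simps)
      then show ?thesis using 3 ps[of "pA p + 2*pl p/3 - z"] by (simp add: ch_aff)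
    next
      case False
      then show ?thesis using z 3 lp ps[of "pA p + 2*pl p/3 - z"] by (auto simp: ch_aff inP_def hat_def)
    qed
  qed
qed

lemma hat_bounds: "0 \<le> hat p z" "hat p z \<le> 1"
  using lp by (auto simp: hat_def field_simps)

lemma hat_ends: "hat p (pA p) = 0" "hat p (pB p) = 0"
  using lp by (auto simp: hat_def pB_eq)

lemma ch_sub: "c \<in> set (refine lam p) \<Longrightarrow> pA p \<le> pA c \<and> pB c \<le> pB p \<and> pl c > 0 \<and> pl p / 6 \<le> pl c \<and> pl c \<le> pl p / 3"
  using lp unfolding refine_eq by (auto simp: pB_eq)

lemma ch_cover: "inP p z \<Longrightarrow> \<exists>c\<in>set (refine lam p). inP c z"
  using lp unfolding refine_eq inP_def pB_eq
  by (cases "z \<le> pA p + pl p/3"; cases "z \<le> pA p + pl p/2"; cases "z \<le> pA p + 2*pl p/3") auto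
end

lemma Sq_ge: "\<bar>psl p\<bar> \<le> Sq p" "1 \<le> Sq p" "Sq p \<le> \<bar>psl p\<bar> + 1"
  unfolding Sq_def
  by (auto intro!: real_le_rsqrt real_le_lsqrt simp: power2_eq_square algebra_simps)

lemma sq_lip: "sqrt (1 + (m + t)\<^sup>2) \<le> sqrt (1 + m\<^sup>2) + \<bar>t\<bar>"
proof (rule real_le_lsqrt)
  let ?S = "sqrt (1 + m\<^sup>2)"
  have S: "\<bar>m\<bar> \<le> ?S" by (rule real_le_rsqrt) simp
  have S2: "?S\<^sup>2 = 1 + m\<^sup>2" by simp
  have "m * t \<le> \<bar>m\<bar> * \<bar>t\<bar>" by (metis abs_ge_self abs_mult)
  also have "\<dots> \<le> ?S * \<bar>t\<bar>" using S by (simp add: mult_right_mono)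
  finally have "m * t \<le> ?S * \<bar>t\<bar>" .
  then show "1 + (m + t)\<^sup>2 \<le> (?S + \<bar>t\<bar>)\<^sup>2"
    using S2 by (simp add: power2_eq_square algebra_simps)
  show "0 \<le> ?S + \<bar>t\<bar>" by simp
qed


lemma ch_ps: assumes "1/6 \<le> lam" "pl p > 0" "c \<in> set (refine lam p)"
  shows "ps c \<le> (1 + 6*lam)/6 * ps p"
proof -
  have Sq0: "Sq p \<ge> 1" by (rule Sq_ge)
  have l0: "lam \<ge> 0" using assms by simp
  have sp: "Sq (ch1 lam p) \<le> (1 + 6*lam) * Sq p"
    using sq_lip[of "psl p" "6*lam*Sq p"] assms(2) l0 Sq0 by (simp add: Sq_def[of "ch1 lam p"] Sq_def[of p] algebra_simps)
  have sm: "Sq (ch2 lam p) \<le> (1 + 6*lam) * Sq p"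
    using sq_lip[of "psl p" "-(6*lam*Sq p)"] assms(2) l0 Sq0 by (simp add: Sq_def[of "ch2 lam p"] Sq_def[of p] algebra_simps)
  have s03: "Sq (ch0 lam p) = Sq p" "Sq (ch3 lam p) = Sq p" using assms(2) by (simp_all add: Sq_def)
  have a: "pl p / 3 * Sq p \<le> (1 + 6*lam)/6 * (pl p * Sq p)"
    using assms Sq0 by (simp add: field_simps mult_right_mono)
  have b: "pl p / 6 * Sq c' \<le> (1 + 6*lam)/6 * (pl p * Sq p)" if "Sq c' \<le> (1 + 6*lam) * Sq p" for c'
    using that assms(2) mult_left_mono[OF that, of "pl p/6"] by (simp add: field_simps)
  from assms(3) show ?thesis unfolding refine_eq ps_def
    using a b[OF sp] b[OF sm] s03 assms(2) by auto
qed

definition Kc :: "real \<Rightarrow> real" where "Kc lam = (1 + 6*lam) * (1 + 1/(6*lam - 1))"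

lemma slope_facts: assumes lam: "1/6 < lam" and t: "t = 6*lam*sqrt(1+\<mu>\<^sup>2)"
  shows "\<bar>\<mu>+t\<bar>+1 \<le> Kc lam * (\<bar>\<mu>\<bar>+1)" "\<bar>\<mu>-t\<bar>+1 \<le> Kc lam * (\<bar>\<mu>\<bar>+1)"
    "\<bar>\<mu>\<bar>+1 \<le> Kc lam * (\<bar>\<mu>+t\<bar>+1)" "\<bar>\<mu>\<bar>+1 \<le> Kc lam * (\<bar>\<mu>-t\<bar>+1)"
    "\<bar>\<mu>-t\<bar>+1 \<le> Kc lam * (\<bar>\<mu>+t\<bar>+1)" "\<bar>\<mu>+t\<bar>+1 \<le> Kc lam * (\<bar>\<mu>-t\<bar>+1)"
proof -
  define S where "S = sqrt(1+\<mu>\<^sup>2)"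
  have S1: "\<bar>\<mu>\<bar> \<le> S" unfolding S_def by (rule real_le_rsqrt) simp
  have S2: "S \<le> \<bar>\<mu>\<bar> + 1" unfolding S_def by (rule real_le_lsqrt) (auto simp: power2_eq_square algebra_simps)
  define A where "A = 1 + 6*lam"
  define B where "B = 1 + 1/(6*lam - 1)"
  have c0: "6*lam - 1 > 0" using lam by simp
  have K: "Kc lam = A * B" by (simp add: Kc_def A_def B_def)
  have A1: "A \<ge> 1" "B \<ge> 1" using lam c0 by (auto simp: A_def B_def)
  have tlo: "6*lam*\<bar>\<mu>\<bar> \<le> t" using S1 lam t S_def by (simp add: mult_left_mono)
  have thi: "t \<le> 6*lam*(\<bar>\<mu>\<bar>+1)" using S2 lam t S_def by (simp add: mult_left_mono)
  have up: "\<bar>\<mu>+t\<bar>+1 \<le> A*(\<bar>\<mu>\<bar>+1)" "\<bar>\<mu>-t\<bar>+1 \<le> A*(\<bar>\<mu>\<bar>+1)"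
  proof -
    have t0: "t \<ge> 0" proof -
      have "6*lam*\<bar>\<mu>\<bar> \<ge> 0" using lam by simp
      then show ?thesis using tlo by linarith
    qed
    have e: "A*(\<bar>\<mu>\<bar>+1) = \<bar>\<mu>\<bar>+1 + 6*lam*(\<bar>\<mu>\<bar>+1)" unfolding A_def by (simp add: algebra_simps)
    have "\<bar>\<mu>+t\<bar> \<le> \<bar>\<mu>\<bar>+t" "\<bar>\<mu>-t\<bar> \<le> \<bar>\<mu>\<bar>+t"
      using t0 abs_triangle_ineq[of \<mu> t] abs_triangle_ineq4[of \<mu> t] by simp_all
    then show "\<bar>\<mu>+t\<bar>+1 \<le> A*(\<bar>\<mu>\<bar>+1)" "\<bar>\<mu>-t\<bar>+1 \<le> A*(\<bar>\<mu>\<bar>+1)" using e thi by linarith+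
  qed
  have lo: "(6*lam-1)*\<bar>\<mu>\<bar> \<le> \<bar>\<mu>+t\<bar>" "(6*lam-1)*\<bar>\<mu>\<bar> \<le> \<bar>\<mu>-t\<bar>"
  proof -
    have e: "(6*lam-1)*\<bar>\<mu>\<bar> = 6*lam*\<bar>\<mu>\<bar> - \<bar>\<mu>\<bar>" by (simp add: algebra_simps)
    have "t - \<bar>\<mu>\<bar> \<le> \<bar>\<mu>+t\<bar>" "t - \<bar>\<mu>\<bar> \<le> \<bar>\<mu>-t\<bar>"
      using abs_ge_self[of "\<mu>+t"] abs_ge_minus_self[of "\<mu>"] abs_ge_minus_self[of "\<mu>-t"] abs_ge_self[of \<mu>] by linarith+
    then show "(6*lam-1)*\<bar>\<mu>\<bar> \<le> \<bar>\<mu>+t\<bar>" "(6*lam-1)*\<bar>\<mu>\<bar> \<le> \<bar>\<mu>-t\<bar>" using e tlo by linarith+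
  qed
  have Bl: "\<bar>\<mu>\<bar>+1 \<le> B*(\<bar>v\<bar>+1)" if "(6*lam-1)*\<bar>\<mu>\<bar> \<le> \<bar>v\<bar>" for v
  proof -
    have "\<bar>\<mu>\<bar> \<le> \<bar>v\<bar>/(6*lam-1)" using that c0 by (simp add: field_simps)
    moreover have "B*(\<bar>v\<bar>+1) = \<bar>v\<bar> + 1 + \<bar>v\<bar>/(6*lam-1) + 1/(6*lam-1)" unfolding B_def by (simp add: algebra_simps add_divide_distrib)
    moreover have "1/(6*lam-1) \<ge> 0" "\<bar>v\<bar> \<ge> 0" using c0 by auto
    ultimately show ?thesis by linarith
  qed
  have AB: "A*(\<bar>\<mu>\<bar>+1) \<le> A*B*(\<bar>\<mu>\<bar>+1)" using A1 by (simp add: mult_right_mono)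
  have BB: "x \<le> B*y \<Longrightarrow> x \<le> A*B*y" if "y \<ge> 0" "x \<ge> 0" for x y
  proof -
    assume h: "x \<le> B*y"
    have "B*y \<ge> 0" using A1 that by simp
    then have "B*y \<le> A*(B*y)" using A1 by (simp add: mult_le_cancel_right1 mult_right_mono)
    then show ?thesis using h by (simp add: mult.assoc)
  qed
  show "\<bar>\<mu>+t\<bar>+1 \<le> Kc lam * (\<bar>\<mu>\<bar>+1)" "\<bar>\<mu>-t\<bar>+1 \<le> Kc lam * (\<bar>\<mu>\<bar>+1)" using up AB K by auto
  show "\<bar>\<mu>\<bar>+1 \<le> Kc lam * (\<bar>\<mu>+t\<bar>+1)" "\<bar>\<mu>\<bar>+1 \<le> Kc lam * (\<bar>\<mu>-t\<bar>+1)"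
    using BB[OF _ _ Bl[OF lo(1)]] BB[OF _ _ Bl[OF lo(2)]] K by auto
  have m1: "A*(\<bar>\<mu>\<bar>+1) \<le> A*(B*(\<bar>v\<bar>+1))" if "(6*lam-1)*\<bar>\<mu>\<bar> \<le> \<bar>v\<bar>" for v
    using Bl[OF that] A1 by (simp add: mult_left_mono)
  show "\<bar>\<mu>-t\<bar>+1 \<le> Kc lam * (\<bar>\<mu>+t\<bar>+1)" "\<bar>\<mu>+t\<bar>+1 \<le> Kc lam * (\<bar>\<mu>-t\<bar>+1)"
    using up m1[OF lo(1)] m1[OF lo(2)] K by (auto simp: mult.assoc)
qed

lemma mem_Suc: "c \<in> set (pieces lam (Suc n)) \<longleftrightarrow> (\<exists>p\<in>set (pieces lam n). c \<in> set (refine lam p))"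
  by simp

lemma inv1: "p \<in> set (pieces lam n) \<Longrightarrow> 0 \<le> pA p \<and> pB p \<le> 1 \<and> 0 < pl p"
proof (induction n arbitrary: p)
  case 0 then show ?case by (simp add: pl_def)
next
  case (Suc n)
  then obtain q where q: "q \<in> set (pieces lam n)" "p \<in> set (refine lam q)" by auto
  from Suc.IH[OF q(1)] ch_sub[where p=q and lam=lam, OF _ q(2)] show ?case by auto
qed

lemma ch_sep: "pl p > 0 \<Longrightarrow> c1 \<in> set (refine lam p) \<Longrightarrow> c2 \<in> set (refine lam p) \<Longrightarrow> c1 \<noteq> c2 \<Longrightarrow>
   pB c1 \<le> pA c2 \<or> pB c2 \<le> pA c1"
  unfolding refine_eq by (auto simp: pB_eq)

lemma inv_sep: "p \<in> set (pieces lam n) \<Longrightarrow> q \<in> set (pieces lam n) \<Longrightarrow> p \<noteq> q \<Longrightarrow> pB p \<le> pA q \<or> pB q \<le> pA p"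
proof (induction n arbitrary: p q)
  case 0 then show ?case by simp
next
  case (Suc n)
  then obtain p1 q1 where p1: "p1 \<in> set (pieces lam n)" "p \<in> set (refine lam p1)"
    and q1: "q1 \<in> set (pieces lam n)" "q \<in> set (refine lam q1)" by auto
  have l1: "pl p1 > 0" "pl q1 > 0" using inv1 p1 q1 by blast+
  show ?case
  proof (cases "p1 = q1")
    case True then show ?thesis using ch_sep[OF l1(1) p1(2)] q1(2) Suc.prems by auto
  next
    case False
    with Suc.IH[OF p1(1) q1(1)] ch_sub[OF l1(1) p1(2)] ch_sub[OF l1(2) q1(2)] show ?thesis by auto
  qed
qed

lemma inv_agree: "p \<in> set (pieces lam n) \<Longrightarrow> q \<in> set (pieces lam n) \<Longrightarrow> inP p z \<Longrightarrow> inP q z \<Longrightarrow> aff p z = aff q z"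
proof (induction n arbitrary: p q)
  case 0 then show ?case by simp
next
  case (Suc n)
  then obtain p1 q1 where p1: "p1 \<in> set (pieces lam n)" "p \<in> set (refine lam p1)"
    and q1: "q1 \<in> set (pieces lam n)" "q \<in> set (refine lam q1)" by auto
  have l1: "pl p1 > 0" "pl q1 > 0" using inv1 p1 q1 by blast+
  have sp: "pA p1 \<le> pA p \<and> pB p \<le> pB p1" "pA q1 \<le> pA q \<and> pB q \<le> pB q1"
    using ch_sub[OF l1(1) p1(2)] ch_sub[OF l1(2) q1(2)] by auto
  have ip: "inP p1 z" "inP q1 z" using sp Suc.prems by (auto simp: inP_def)
  have ap: "aff p z = aff p1 z + lam * ps p1 * hat p1 z" "aff q z = aff q1 z + lam * ps q1 * hat q1 z"
    using child_aff[OF l1(1) p1(2)] child_aff[OF l1(2) q1(2)] Suc.prems by auto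
  show ?case
  proof (cases "p1 = q1")
    case True then show ?thesis using ap by simp
  next
    case False
    then have "pB p1 \<le> pA q1 \<or> pB q1 \<le> pA p1" using inv_sep p1(1) q1(1) by blast
    then have "(z = pB p1 \<and> z = pA q1) \<or> (z = pB q1 \<and> z = pA p1)" using ip by (auto simp: inP_def)
    then have "hat p1 z = 0 \<and> hat q1 z = 0" using hat_ends[OF l1(1)] hat_ends[OF l1(2)] by auto
    then show ?thesis using ap Suc.IH[OF p1(1) q1(1) ip] by simp
  qed
qed

lemma inv_cover: "0 \<le> z \<Longrightarrow> z \<le> 1 \<Longrightarrow> \<exists>p\<in>set (pieces lam n). inP p z"
proof (induction n)
  case 0 then show ?case by (simp add: inP_def)
next
  case (Suc n)
  then obtain p where p: "p \<in> set (pieces lam n)" "inP p z" by auto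
  then obtain c where "c \<in> set (refine lam p)" "inP c z" using ch_cover[of p z lam] inv1 by blast
  then show ?case using p by auto
qed

lemma inv_nbr: "p \<in> set (pieces lam n) \<Longrightarrow> pB p < 1 \<Longrightarrow> \<exists>q\<in>set (pieces lam n). pA q = pB p"
proof (induction n arbitrary: p)
  case 0 then show ?case by simp
next
  case (Suc n)
  then obtain p1 where p1: "p1 \<in> set (pieces lam n)" "p \<in> set (refine lam p1)" by auto
  have l1: "pl p1 > 0" using inv1 p1 by blast
  have r: "set (refine lam p1) \<subseteq> set (pieces lam (Suc n))" using p1 by auto
  from p1(2) consider "p = ch0 lam p1" | "p = ch1 lam p1" | "p = ch2 lam p1" | "p = ch3 lam p1" unfolding refine_eq by auto
  then show ?case
  proof cases
    case 4
    have "pB p1 < 1" using Suc.prems 4 by simp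
    then obtain q where q: "q \<in> set (pieces lam n)" "pA q = pB p1" using Suc.IH[OF p1(1)] by auto
    then have "ch0 lam q \<in> set (pieces lam (Suc n))" by (auto simp: refine_eq)
    then show ?thesis using q 4 by (intro bexI[of _ "ch0 lam q"]) auto
  next
    case 1 then show ?thesis using r by (intro bexI[of _ "ch1 lam p1"]) (auto simp: refine_eq)
  next
    case 2 then show ?thesis using r by (intro bexI[of _ "ch2 lam p1"]) (auto simp: refine_eq)
  next
    case 3 then show ?thesis using r by (intro bexI[of _ "ch3 lam p1"]) (auto simp: refine_eq)
  qed
qed

lemma inv_nbl: "p \<in> set (pieces lam n) \<Longrightarrow> 0 < pA p \<Longrightarrow> \<exists>q\<in>set (pieces lam n). pB q = pA p"
proof (induction n arbitrary: p)
  case 0 then show ?case by simp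
next
  case (Suc n)
  then obtain p1 where p1: "p1 \<in> set (pieces lam n)" "p \<in> set (refine lam p1)" by auto
  have l1: "pl p1 > 0" using inv1 p1 by blast
  have r: "set (refine lam p1) \<subseteq> set (pieces lam (Suc n))" using p1 by auto
  from p1(2) consider "p = ch0 lam p1" | "p = ch1 lam p1" | "p = ch2 lam p1" | "p = ch3 lam p1" unfolding refine_eq by auto
  then show ?case
  proof cases
    case 1
    have "0 < pA p1" using Suc.prems 1 by simp
    then obtain q where q: "q \<in> set (pieces lam n)" "pB q = pA p1" using Suc.IH[OF p1(1)] by auto
    then have "ch3 lam q \<in> set (pieces lam (Suc n))" by (auto simp: refine_eq)
    then show ?thesis using q 1 by (intro bexI[of _ "ch3 lam q"]) auto
  next
    case 2 then show ?thesis using r by (intro bexI[of _ "ch0 lam p1"]) (auto simp: refine_eq)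
  next
    case 3 then show ?thesis using r by (intro bexI[of _ "ch1 lam p1"]) (auto simp: refine_eq)
  next
    case 4 then show ?thesis using r by (intro bexI[of _ "ch2 lam p1"]) (auto simp: refine_eq)
  qed
qed


definition Rel :: "real \<Rightarrow> _ \<Rightarrow> _ \<Rightarrow> bool" where
  "Rel lam p q = (pl q \<le> 2 * pl p \<and> pl p \<le> 2 * pl q \<and> \<bar>psl q\<bar> + 1 \<le> Kc lam * (\<bar>psl p\<bar> + 1) \<and> \<bar>psl p\<bar> + 1 \<le> Kc lam * (\<bar>psl q\<bar> + 1))"

lemma ch_ratio: assumes lam: "1/6 < lam" and lp: "pl p > 0" and c: "c1 \<in> set (refine lam p)" "c2 \<in> set (refine lam p)"
  and e: "pB c1 = pA c2" shows "Rel lam c1 c2"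
proof -
  note sf = slope_facts[OF lam, of "6*lam*Sq p" "psl p", OF Sq_def[THEN arg_cong[where f="\<lambda>x. 6*lam*x"]]]
  from c(1) consider "c1 = ch0 lam p" | "c1 = ch1 lam p" | "c1 = ch2 lam p" | "c1 = ch3 lam p" unfolding refine_eq by auto
  then show ?thesis
  proof cases
    case 1
    then have "c2 = ch1 lam p" using c(2) e lp unfolding refine_eq by (auto simp: pB_eq)
    then show ?thesis using 1 lp sf by (simp add: Rel_def)
  next
    case 2
    then have "c2 = ch2 lam p" using c(2) e lp unfolding refine_eq by (auto simp: pB_eq)
    then show ?thesis using 2 lp sf by (simp add: Rel_def)
  next
    case 3
    then have "c2 = ch3 lam p" using c(2) e lp unfolding refine_eq by (auto simp: pB_eq)
    then show ?thesis using 3 lp sf by (simp add: Rel_def)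
  next
    case 4
    then have False using c(2) e lp unfolding refine_eq by (auto simp: pB_eq)
    then show ?thesis ..
  qed
qed

lemma inv_ratio: assumes lam: "1/6 < lam"
  shows "p \<in> set (pieces lam n) \<Longrightarrow> q \<in> set (pieces lam n) \<Longrightarrow> pB p = pA q \<Longrightarrow> Rel lam p q"
proof (induction n arbitrary: p q)
  case 0 then show ?case by simp
next
  case (Suc n)
  then obtain p1 q1 where p1: "p1 \<in> set (pieces lam n)" "p \<in> set (refine lam p1)"
    and q1: "q1 \<in> set (pieces lam n)" "q \<in> set (refine lam q1)" by auto
  have l1: "pl p1 > 0" "pl q1 > 0" using inv1 p1 q1 by blast+
  have sp: "pA p1 \<le> pA p \<and> pB p \<le> pB p1 \<and> pl p > 0" "pA q1 \<le> pA q \<and> pB q \<le> pB q1 \<and> pl q > 0"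
    using ch_sub[OF l1(1) p1(2)] ch_sub[OF l1(2) q1(2)] by auto
  show ?case
  proof (cases "p1 = q1")
    case True then show ?thesis using ch_ratio[OF lam l1(1) p1(2)] q1(2) Suc.prems by auto
  next
    case False
    then have "pB p1 \<le> pA q1 \<or> pB q1 \<le> pA p1" using inv_sep p1(1) q1(1) by blast
    then have e: "pB p = pB p1" "pA q = pA q1" using sp Suc.prems(3) by (auto simp: pl_def)
    have "p = ch3 lam p1" using p1(2) e l1 unfolding refine_eq by (auto simp: pB_eq)
    moreover have "q = ch0 lam q1" using q1(2) e l1 unfolding refine_eq by (auto simp: pB_eq)
    moreover have "Rel lam p1 q1" using Suc.IH[OF p1(1) q1(1)] e Suc.prems by simp
    ultimately show ?thesis using l1 by (simp add: Rel_def)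
  qed
qed

lemma Fn_at: assumes "p \<in> set (pieces lam n)" "inP p z" shows "Fn lam n z = aff p z"
proof -
  have "find (\<lambda>p. inP p z) (pieces lam n) \<noteq> None" using assms unfolding find_None_iff by blast
  then obtain q where q: "find (\<lambda>p. inP p z) (pieces lam n) = Some q" by auto
  then have "q \<in> set (pieces lam n)" "inP q z" by (auto simp: find_Some_iff)
  then have "aff q z = aff p z" using inv_agree assms by blast
  then show ?thesis using q by (simp add: Fn_eq piece_at_eq)
qed

lemma slope_at: assumes "p \<in> set (pieces lam n)" "pA p < x" "x < pB p" shows "slope_n lam n x = psl p"
proof -
  have ip: "inP p x" using assms by (simp add: inP_def)
  have "find (\<lambda>p. inP p x) (pieces lam n) \<noteq> None" using assms ip unfolding find_None_iff by blast
  then obtain q where q: "find (\<lambda>p. inP p x) (pieces lam n) = Some q" by auto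
  then have qq: "q \<in> set (pieces lam n)" "inP q x" by (auto simp: find_Some_iff)
  have "q = p"
  proof (rule ccontr)
    assume "q \<noteq> p"
    then have "pB q \<le> pA p \<or> pB p \<le> pA q" using inv_sep qq(1) assms(1) by blast
    then show False using qq(2) assms by (auto simp: inP_def)
  qed
  then show ?thesis using q by (simp add: slope_eq piece_at_eq)
qed

definition rho :: "real \<Rightarrow> real" where "rho lam = (1 + 6*lam)/6"

lemma ps_nonneg: "p \<in> set (pieces lam n) \<Longrightarrow> 0 \<le> ps p"
  using inv1[of p lam n] Sq_ge(2)[of p] by (simp add: ps_def)

lemma desc: assumes lam: "1/6 \<le> lam" and p: "p \<in> set (pieces lam n)" "inP p z"
  shows "\<exists>q\<in>set (pieces lam (n+j)). inP q z \<and> ps q \<le> rho lam ^ j * ps p \<and>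
     \<bar>Fn lam (n+j) z - aff p z\<bar> \<le> lam * ps p * (\<Sum>i<j. rho lam ^ i)"
proof (induction j)
  case 0 then show ?case using p Fn_at[OF p] by auto
next
  case (Suc j)
  then obtain q where q: "q \<in> set (pieces lam (n+j))" "inP q z" "ps q \<le> rho lam ^ j * ps p"
    "\<bar>Fn lam (n+j) z - aff p z\<bar> \<le> lam * ps p * (\<Sum>i<j. rho lam ^ i)" by blast
  have lq: "pl q > 0" using inv1 q(1) by blast
  obtain c where c: "c \<in> set (refine lam q)" "inP c z" using ch_cover[OF lq q(2)] by blast
  have cS: "c \<in> set (pieces lam (n + Suc j))" using c q(1) by auto
  have Fc: "Fn lam (n + Suc j) z = aff q z + lam * ps q * hat q z"
    using Fn_at[OF cS c(2)] child_aff[OF lq c] by simp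
  have Fq: "Fn lam (n+j) z = aff q z" using Fn_at[OF q(1,2)] .
  have h: "0 \<le> hat q z" "hat q z \<le> 1" using hat_bounds[OF lq] by auto
  have l0: "lam \<ge> 0" using lam by simp
  have psq: "0 \<le> ps q" using ps_nonneg q(1) by blast
  have t1: "0 \<le> lam * ps q * hat q z" using l0 psq h by simp
  have t2: "lam * ps q * hat q z \<le> lam * ps q" using l0 psq h mult_left_mono[OF h(2), of "lam * ps q"] by simp
  have t3: "lam * ps q \<le> lam * (rho lam ^ j * ps p)" using q(3) l0 by (simp add: mult_left_mono)
  have "\<bar>Fn lam (n + Suc j) z - aff p z\<bar> \<le> \<bar>Fn lam (n+j) z - aff p z\<bar> + lam * ps q * hat q z"
    using Fc Fq t1 by linarith
  also have "\<dots> \<le> lam * ps p * (\<Sum>i<j. rho lam ^ i) + lam * (rho lam ^ j * ps p)" using q(4) t2 t3 by linarith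
  also have "\<dots> = lam * ps p * (\<Sum>i<Suc j. rho lam ^ i)" by (simp add: algebra_simps)
  finally have A: "\<bar>Fn lam (n + Suc j) z - aff p z\<bar> \<le> lam * ps p * (\<Sum>i<Suc j. rho lam ^ i)" .
  have "ps c \<le> rho lam * ps q" using ch_ps[OF lam lq c(1)] by (simp add: rho_def)
  also have "\<dots> \<le> rho lam * (rho lam ^ j * ps p)" using q(3) lam by (intro mult_left_mono) (auto simp: rho_def)
  finally have B: "ps c \<le> rho lam ^ Suc j * ps p" by (simp add: mult.assoc)
  show ?case using cS c(2) A B by blast
qed

definition Dc :: "real \<Rightarrow> real" where "Dc lam = lam / (1 - rho lam)"

lemma geo_le: "0 \<le> (r::real) \<Longrightarrow> r < 1 \<Longrightarrow> (\<Sum>i<j. r ^ i) \<le> 1 / (1 - r)"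
proof -
  assume r: "0 \<le> r" "r < 1"
  have "(\<Sum>i<j. r ^ i) = (1 - r^j) / (1 - r)" using r sum_gp_strict[of r j] by simp
  also have "\<dots> \<le> 1 / (1 - r)" using r by (intro divide_right_mono) auto
  finally show ?thesis .
qed

lemma desc2: assumes lam: "1/6 \<le> lam" "lam < 5/6" and p: "p \<in> set (pieces lam n)" "inP p z"
  shows "\<bar>Fn lam (n+j) z - aff p z\<bar> \<le> Dc lam * ps p"
proof -
  obtain q where "\<bar>Fn lam (n+j) z - aff p z\<bar> \<le> lam * ps p * (\<Sum>i<j. rho lam ^ i)"
    using desc[OF lam(1) p, of j] by blast
  also have "\<dots> \<le> lam * ps p * (1 / (1 - rho lam))"
    using geo_le[of "rho lam" j] lam ps_nonneg[OF p(1)] by (intro mult_left_mono) (auto simp: rho_def)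
  finally show ?thesis by (simp add: Dc_def)
qed


lemma Dc_pos: "1/6 \<le> lam \<Longrightarrow> lam < 5/6 \<Longrightarrow> 0 \<le> Dc lam"
  by (simp add: Dc_def rho_def)

lemma conv: assumes lam: "1/6 \<le> lam" "lam < 5/6" and z: "0 \<le> z" "z \<le> 1"
  shows "convergent (\<lambda>k. Fn lam k z)"
proof -
  define r where "r = rho lam"
  have r: "0 < r" "r < 1" using lam by (auto simp: r_def rho_def)
  have p0: "(0,1,0,0) \<in> set (pieces lam 0)" "inP (0,1,0,0) z" using z by (auto simp: inP_def)
  have ps0: "ps (0::real,1::real,0::real,0::real) = 1" by (simp add: ps_def pl_def Sq_def psl_def)
  have qk: "\<exists>q\<in>set (pieces lam k). inP q z \<and> ps q \<le> r ^ k" for k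
    using desc[OF lam(1) p0, of k] ps0 by (auto simp: r_def)
  have bnd: "\<bar>Fn lam m z - Fn lam k z\<bar> \<le> Dc lam * r ^ k" if "k \<le> m" for k m
  proof -
    obtain q where q: "q\<in>set (pieces lam k)" "inP q z" "ps q \<le> r ^ k" using qk by blast
    have "\<bar>Fn lam (k + (m-k)) z - aff q z\<bar> \<le> Dc lam * ps q" by (rule desc2[OF lam q(1,2)])
    also have "\<dots> \<le> Dc lam * r ^ k" using q(3) Dc_pos[OF lam] by (simp add: mult_left_mono)
    finally show ?thesis using that Fn_at[OF q(1,2)] by simp
  qed
  have "Cauchy (\<lambda>k. Fn lam k z)"
  proof (rule CauchyI)
    fix e :: real assume e: "0 < e"
    have "0 < e / (2 * Dc lam + 1)" using e Dc_pos[OF lam] by simp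
    then obtain M where M: "r ^ M < e / (2 * Dc lam + 1)" using real_arch_pow_inv r(2) by blast
    have "(2 * Dc lam + 1) * r ^ M < e" using M Dc_pos[OF lam] by (simp add: field_simps)
    moreover have "2 * Dc lam * r^M \<le> (2 * Dc lam + 1) * r ^ M" using r by (simp add: algebra_simps)
    ultimately have eM: "2 * Dc lam * r^M < e" by linarith
    show "\<exists>M. \<forall>m\<ge>M. \<forall>n\<ge>M. norm (Fn lam m z - Fn lam n z) < e"
    proof (intro exI allI impI)
      fix m n assume "M \<le> m" "M \<le> n"
      then have "\<bar>Fn lam m z - Fn lam M z\<bar> \<le> Dc lam * r ^ M" "\<bar>Fn lam n z - Fn lam M z\<bar> \<le> Dc lam * r ^ M"
        using bnd by auto
      then show "norm (Fn lam m z - Fn lam n z) < e" using eM by simp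
    qed
  qed
  then show ?thesis by (simp add: Cauchy_convergent_iff)
qed

lemma Flim_bound: assumes lam: "1/6 \<le> lam" "lam < 5/6" and p: "p \<in> set (pieces lam n)" "inP p z"
  shows "\<bar>Flim lam z - aff p z\<bar> \<le> Dc lam * ps p"
proof -
  have z: "0 \<le> z" "z \<le> 1" using inv1[OF p(1)] p(2) by (auto simp: inP_def)
  have "(\<lambda>k. Fn lam k z) \<longlonglongrightarrow> Flim lam z"
    using conv[OF lam z] by (simp add: convergent_LIMSEQ_iff Flim_def)
  then have "(\<lambda>j. Fn lam (j + n) z) \<longlonglongrightarrow> Flim lam z" by (rule LIMSEQ_ignore_initial_segment)
  then have "(\<lambda>j. \<bar>Fn lam (j + n) z - aff p z\<bar>) \<longlonglongrightarrow> \<bar>Flim lam z - aff p z\<bar>"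
    by (intro tendsto_intros)
  then show ?thesis
    by (rule LIMSEQ_le_const2) (use desc2[OF lam p] in \<open>auto simp: add.commute\<close>)
qed

definition Smap :: "nat \<Rightarrow> real \<times> real \<Rightarrow> real \<times> real" where
  "Smap d I = (if d = 0 then (fst I/3, snd I/3) else if d = 1 then ((fst I+2)/6, (snd I+2)/6)
     else if d = 2 then ((4 - snd I)/6, (4 - fst I)/6) else ((fst I+2)/3, (snd I+2)/3))"

definition proj :: "real\<times>real\<times>real\<times>real \<Rightarrow> real \<times> real" where "proj p = (pA p, pB p)"

lemma smap_ch: assumes "proj q = Smap d (proj p)"
  shows "d \<noteq> 2 \<Longrightarrow> proj (ch0 lam' q) = Smap d (proj (ch0 lam p))"
    "d \<noteq> 2 \<Longrightarrow> proj (ch1 lam' q) = Smap d (proj (ch1 lam p))"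
    "d \<noteq> 2 \<Longrightarrow> proj (ch2 lam' q) = Smap d (proj (ch2 lam p))"
    "d \<noteq> 2 \<Longrightarrow> proj (ch3 lam' q) = Smap d (proj (ch3 lam p))"
    "d = 2 \<Longrightarrow> proj (ch3 lam' q) = Smap d (proj (ch0 lam p))"
    "d = 2 \<Longrightarrow> proj (ch2 lam' q) = Smap d (proj (ch1 lam p))"
    "d = 2 \<Longrightarrow> proj (ch1 lam' q) = Smap d (proj (ch2 lam p))"
    "d = 2 \<Longrightarrow> proj (ch0 lam' q) = Smap d (proj (ch3 lam p))"
  using assms apply (auto simp: proj_def Smap_def pl_def split: if_splits)
  apply (simp_all add: field_simps)
  done

lemma smap_piece: assumes d: "d \<le> 3" shows "p \<in> set (pieces lam n) \<Longrightarrow> \<exists>q\<in>set (pieces lam (Suc n)). proj q = Smap d (proj p)"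
proof (induction n arbitrary: p)
  case 0
  then have p: "p = (0,1,0,0)" by simp
  have r: "set (pieces lam (Suc 0)) = set (refine lam (0,1,0,0))" by simp
  have "d = 0 \<or> d = 1 \<or> d = 2 \<or> d = 3" using d by auto
  then show ?case unfolding r p refine_eq
    by (auto simp: proj_def Smap_def pl_def)
next
  case (Suc n)
  then obtain p1 where p1: "p1 \<in> set (pieces lam n)" "p \<in> set (refine lam p1)" by auto
  obtain q1 where q1: "q1 \<in> set (pieces lam (Suc n))" "proj q1 = Smap d (proj p1)" using Suc.IH[OF p1(1)] by blast
  have sub: "set (refine lam q1) \<subseteq> set (pieces lam (Suc (Suc n)))" using q1(1) by auto
  have "\<exists>c\<in>set (refine lam q1). proj c = Smap d (proj p)"
  proof (cases "d = 2")
    case True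
    then show ?thesis using p1(2) smap_ch[OF q1(2), of lam lam] unfolding refine_eq
      by (auto intro: bexI[of _ "ch0 lam q1"] bexI[of _ "ch1 lam q1"] bexI[of _ "ch2 lam q1"] bexI[of _ "ch3 lam q1"])
  next
    case False
    then show ?thesis using p1(2) smap_ch[OF q1(2), of lam lam] unfolding refine_eq
      by (auto intro: bexI[of _ "ch0 lam q1"] bexI[of _ "ch1 lam q1"] bexI[of _ "ch2 lam q1"] bexI[of _ "ch3 lam q1"])
  qed
  then show ?case using sub by blast
qed


primrec Jm :: "nat \<Rightarrow> real \<Rightarrow> real \<times> real" where
  "Jm 0 x = (0,1)" | "Jm (Suc n) x = Smap (Umap x) (Jm n (Tmap x))"

lemma Umap_le: "Umap x \<le> 3" by (simp add: Umap_def)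

lemma J_piece: "\<exists>p\<in>set (pieces lam n). proj p = Jm n x"
proof (induction n arbitrary: x)
  case 0 then show ?case by (simp add: proj_def)
next
  case (Suc n)
  obtain p where "p \<in> set (pieces lam n)" "proj p = Jm n (Tmap x)" using Suc.IH by blast
  then show ?case using smap_piece[OF Umap_le, of p lam n x] by auto
qed

lemma digit_Suc: "digit (Suc k) x = digit k (Tmap x)"
  by (simp add: digit_def funpow_Suc_right del: funpow.simps)

lemma digit_0: "digit 0 x = Umap x" by (simp add: digit_def)

lemma card_Suc_filter: "card {k. k < Suc n \<and> P k} = card {k. k < n \<and> P k} + (if P n then 1 else 0)"
proof (cases "P n")
  case True
  then have "{k. k < Suc n \<and> P k} = insert n {k. k < n \<and> P k}" by auto
  then show ?thesis using True by simp
next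
  case False
  then have "{k. k < Suc n \<and> P k} = {k. k < n \<and> P k}" using less_Suc_eq by auto
  then show ?thesis using False by simp
qed

definition cf :: "nat \<Rightarrow> real" where "cf d = (if d \<in> {0,3} then 1/3 else 1/6)"

lemma ell_prod: "ell n x = (\<Prod>k<n. cf (digit k x))"
proof (induction n)
  case 0 then show ?case by (simp add: ell_def beta03_def beta12_def)
next
  case (Suc n)
  have d: "digit n x \<in> {1,2} \<longleftrightarrow> digit n x \<notin> {0,3}" by (auto simp: digit_def Umap_def)
  have "ell (Suc n) x = ell n x * cf (digit n x)"
    unfolding ell_def beta03_def beta12_def card_Suc_filter using d by (auto simp: cf_def)
  then show ?case using Suc by simp
qed

lemma ell_Suc: "ell (Suc n) x = cf (Umap x) * ell n (Tmap x)"
  unfolding ell_prod prod.lessThan_Suc_shift digit_Suc digit_0 ..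

lemma ell_0: "ell 0 x = 1" by (simp add: ell_prod)

lemma Tmap_range: "0 \<le> x \<Longrightarrow> x \<le> 1 \<Longrightarrow> 0 \<le> Tmap x \<and> Tmap x \<le> 1"
  by (auto simp: Tmap_def)

lemma Eset_T: "x \<notin> Eset \<Longrightarrow> Tmap x \<notin> Eset"
proof -
  assume x: "x \<notin> Eset"
  show "Tmap x \<notin> Eset"
  proof
    assume "Tmap x \<in> Eset"
    then obtain N where "(\<forall>k\<ge>N. digit k (Tmap x) = 0) \<or> (\<forall>k\<ge>N. digit k (Tmap x) = 3)" by (auto simp: Eset_def)
    then have "(\<forall>k\<ge>Suc N. digit k x = 0) \<or> (\<forall>k\<ge>Suc N. digit k x = 3)"
      by (metis Suc_le_D Suc_le_mono digit_Suc)
    then have "x \<in> Eset" unfolding Eset_def by blast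
    then show False using x by simp
  qed
qed

lemma Eset_01: "0 \<in> Eset" "1 \<in> Eset"
proof -
  have "(Tmap ^^ k) 0 = 0" for k by (induction k) (auto simp: Tmap_def)
  then show "0 \<in> Eset" by (auto simp: Eset_def digit_def Umap_def)
  have "(Tmap ^^ k) 1 = 1" for k by (induction k) (auto simp: Tmap_def)
  then show "1 \<in> Eset" by (auto simp: Eset_def digit_def Umap_def)
qed

lemma J_main: "0 \<le> x \<Longrightarrow> x \<le> 1 \<Longrightarrow> x \<notin> Eset \<Longrightarrow>
   fst (Jm n x) < x \<and> x < snd (Jm n x) \<and> snd (Jm n x) - fst (Jm n x) = ell n x"
proof (induction n arbitrary: x)
  case 0
  then have "x \<noteq> 0" "x \<noteq> 1" using Eset_01 by auto
  then show ?case using 0 by (auto simp: ell_0)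
next
  case (Suc n)
  obtain a b where ab: "Jm n (Tmap x) = (a,b)" by fastforce
  have "a < Tmap x \<and> Tmap x < b \<and> b - a = ell n (Tmap x)"
    using Suc.IH[of "Tmap x"] Tmap_range[OF Suc.prems(1,2)] Eset_T[OF Suc.prems(3)] ab by auto
  then show ?case unfolding Jm.simps ab ell_Suc
    by (auto simp: Smap_def Umap_def Tmap_def cf_def field_simps split: if_splits)
qed


lemma ps_le: "pl p \<ge> 0 \<Longrightarrow> ps p \<le> pl p * (\<bar>psl p\<bar> + 1)"
  unfolding ps_def using Sq_ge(3)[of p] by (simp add: mult_left_mono)

lemma aff_diff: "\<bar>aff p x - aff p y\<bar> = \<bar>psl p\<bar> * \<bar>x - y\<bar>"
  by (simp add: aff_def abs_mult[symmetric] algebra_simps)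

lemma Kc_pos: "1/6 < lam \<Longrightarrow> 0 < Kc lam"
proof -
  assume "1/6 < lam"
  then have "0 < 6*lam - 1" "0 < 1 + 6*lam" by auto
  then have "0 < 1 + 1/(6*lam - 1)" by (smt (verit) divide_pos_pos)
  then show ?thesis unfolding Kc_def using \<open>0 < 1 + 6*lam\<close> by simp
qed

lemma main_bound:
  assumes lam: "1/6 < lam" "lam < 5/6"
    and P: "P \<in> set (pieces lam n)" "pA P < x" "x < pB P"
    and y: "0 \<le> y" "y \<le> 1" "\<bar>x - y\<bar> \<le> pl P / 2"
  shows "\<bar>Flim lam x - Flim lam y\<bar> \<le> (1 + Kc lam) * (1 + 2 * Dc lam) * (pl P * (\<bar>psl P\<bar> + 1))"
proof -
  define K where "K = Kc lam"
  define D where "D = Dc lam"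
  define L where "L = pl P"
  define u where "u = \<bar>psl P\<bar> + 1"
  define w where "w = L * u"
  have lam': "1/6 \<le> lam" using lam by simp
  have K0: "0 < K" using Kc_pos[OF lam(1)] by (simp add: K_def)
  have D0: "0 \<le> D" using Dc_pos[OF lam' lam(2)] by (simp add: D_def)
  have L0: "0 < L" using inv1[OF P(1)] by (simp add: L_def)
  have u0: "1 \<le> u" by (simp add: u_def)
  have w0: "0 \<le> w" using L0 u0 by (simp add: w_def)
  have Dw: "0 \<le> D * w" "0 \<le> K * w" "0 \<le> D * K * w" using D0 K0 w0 by auto
  have ipx: "inP P x" using P by (simp add: inP_def)
  have e1: "\<bar>Flim lam x - aff P x\<bar> \<le> D * w"
  proof -
    have "\<bar>Flim lam x - aff P x\<bar> \<le> D * ps P" using Flim_bound[OF lam' lam(2) P(1) ipx] by (simp add: D_def)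
    also have "\<dots> \<le> D * w" using ps_le[of P] L0 D0 by (intro mult_left_mono) (auto simp: w_def L_def u_def)
    finally show ?thesis .
  qed
  have expand: "(1 + K) * (1 + 2 * D) * w = w + 2 * (D * w) + K * w + 2 * (D * K * w)"
    by (simp add: algebra_simps)
  have "\<bar>Flim lam x - Flim lam y\<bar> \<le> (1 + K) * (1 + 2 * D) * w"
  proof (cases "inP P y")
    case True
    have e2: "\<bar>Flim lam y - aff P y\<bar> \<le> D * w"
    proof -
      have "\<bar>Flim lam y - aff P y\<bar> \<le> D * ps P" using Flim_bound[OF lam' lam(2) P(1) True] by (simp add: D_def)
      also have "\<dots> \<le> D * w" using ps_le[of P] L0 D0 by (intro mult_left_mono) (auto simp: w_def L_def u_def)
      finally show ?thesis .
    qed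
    have e3: "\<bar>aff P x - aff P y\<bar> \<le> w"
    proof -
      have "\<bar>x - y\<bar> \<le> L" using y(3) L0 by (simp add: L_def)
      then have "\<bar>psl P\<bar> * \<bar>x - y\<bar> \<le> \<bar>psl P\<bar> * L" by (simp add: mult_left_mono)
      also have "\<dots> \<le> u * L" using L0 by (simp add: u_def)
      finally show ?thesis by (simp add: aff_diff w_def mult.commute)
    qed
    show ?thesis using e1 e2 e3 expand Dw by linarith
  next
    case False
    then consider "y > pB P" | "y < pA P" by (auto simp: inP_def)
    then show ?thesis
    proof cases
      case 1
      then have "pB P < 1" using y by simp
      then obtain Q where Q: "Q \<in> set (pieces lam n)" "pA Q = pB P" using inv_nbr[OF P(1)] by blast
      have R: "Rel lam P Q" using inv_ratio[OF lam(1) P(1) Q(1) Q(2)[symmetric]] .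
      then have R': "pl Q \<le> 2 * L" "L \<le> 2 * pl Q" "\<bar>psl Q\<bar> + 1 \<le> K * u" by (auto simp: Rel_def L_def K_def u_def)
      have yb: "y - pB P \<le> L / 2" using y(3) 1 P(2,3) abs_ge_minus_self[of "x-y"] by (simp add: L_def)
      have iqy: "inP Q y" using 1 yb R' Q(2) by (auto simp: inP_def pB_eq[of Q])
      have iqb: "inP Q (pB P)" using Q(2) inv1[OF Q(1)] by (auto simp: inP_def pB_eq[of Q])
      have ipb: "inP P (pB P)" using P by (simp add: inP_def)
      have ag: "aff P (pB P) = aff Q (pB P)" using inv_agree[OF P(1) Q(1) ipb iqb] .
      have e2: "\<bar>Flim lam y - aff Q y\<bar> \<le> 2 * (D * K * w)"
      proof -
        have a: "\<bar>Flim lam y - aff Q y\<bar> \<le> D * ps Q" using Flim_bound[OF lam' lam(2) Q(1) iqy] by (simp add: D_def)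
        have "ps Q \<le> pl Q * (\<bar>psl Q\<bar> + 1)" using ps_le[of Q] inv1[OF Q(1)] by simp
        also have "\<dots> \<le> (2 * L) * (K * u)" using R' inv1[OF Q(1)] L0 by (intro mult_mono) auto
        finally have "D * ps Q \<le> D * ((2 * L) * (K * u))" using D0 by (simp add: mult_left_mono)
        then show ?thesis using a by (simp add: w_def algebra_simps)
      qed
      have e3: "\<bar>aff P x - aff Q y\<bar> \<le> w + K * w"
      proof -
        have "\<bar>aff P x - aff Q y\<bar> \<le> \<bar>aff P x - aff P (pB P)\<bar> + \<bar>aff Q (pB P) - aff Q y\<bar>" using ag by linarith
        also have "\<dots> = \<bar>psl P\<bar> * \<bar>x - pB P\<bar> + \<bar>psl Q\<bar> * \<bar>pB P - y\<bar>" by (simp add: aff_diff)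
        also have "\<dots> \<le> u * L + (K * u) * L"
        proof (intro add_mono mult_mono)
          show "\<bar>x - pB P\<bar> \<le> L" "\<bar>pB P - y\<bar> \<le> L" using P yb 1 L0 by (auto simp: L_def pB_eq[of P])
          show "\<bar>psl P\<bar> \<le> u" by (simp add: u_def)
          show "\<bar>psl Q\<bar> \<le> K * u" using R' by simp
        qed (use K0 u0 in auto)
        finally show ?thesis by (simp add: w_def algebra_simps)
      qed
      show ?thesis using e1 e2 e3 expand Dw by linarith
    next
      case 2
      then have "0 < pA P" using y by simp
      then obtain Q where Q: "Q \<in> set (pieces lam n)" "pB Q = pA P" using inv_nbl[OF P(1)] by blast
      have R: "Rel lam Q P" using inv_ratio[OF lam(1) Q(1) P(1) Q(2)] .
      then have R': "pl Q \<le> 2 * L" "L \<le> 2 * pl Q" "\<bar>psl Q\<bar> + 1 \<le> K * u" by (auto simp: Rel_def L_def K_def u_def)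
      have yb: "pA P - y \<le> L / 2" using y(3) 2 P(2,3) abs_ge_self[of "x-y"] by (simp add: L_def)
      have iqy: "inP Q y" using 2 yb R' Q(2) by (auto simp: inP_def pB_eq[of Q])
      have iqb: "inP Q (pA P)" using Q(2) inv1[OF Q(1)] by (auto simp: inP_def pB_eq[of Q])
      have ipb: "inP P (pA P)" using P by (simp add: inP_def)
      have ag: "aff P (pA P) = aff Q (pA P)" using inv_agree[OF P(1) Q(1) ipb iqb] .
      have e2: "\<bar>Flim lam y - aff Q y\<bar> \<le> 2 * (D * K * w)"
      proof -
        have a: "\<bar>Flim lam y - aff Q y\<bar> \<le> D * ps Q" using Flim_bound[OF lam' lam(2) Q(1) iqy] by (simp add: D_def)
        have "ps Q \<le> pl Q * (\<bar>psl Q\<bar> + 1)" using ps_le[of Q] inv1[OF Q(1)] by simp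
        also have "\<dots> \<le> (2 * L) * (K * u)" using R' inv1[OF Q(1)] L0 by (intro mult_mono) auto
        finally have "D * ps Q \<le> D * ((2 * L) * (K * u))" using D0 by (simp add: mult_left_mono)
        then show ?thesis using a by (simp add: w_def algebra_simps)
      qed
      have e3: "\<bar>aff P x - aff Q y\<bar> \<le> w + K * w"
      proof -
        have "\<bar>aff P x - aff Q y\<bar> \<le> \<bar>aff P x - aff P (pA P)\<bar> + \<bar>aff Q (pA P) - aff Q y\<bar>" using ag by linarith
        also have "\<dots> = \<bar>psl P\<bar> * \<bar>x - pA P\<bar> + \<bar>psl Q\<bar> * \<bar>pA P - y\<bar>" by (simp add: aff_diff)
        also have "\<dots> \<le> u * L + (K * u) * L"
        proof (intro add_mono mult_mono)
          show "\<bar>x - pA P\<bar> \<le> L" "\<bar>pA P - y\<bar> \<le> L" using P yb 2 L0 by (auto simp: L_def pB_eq[of P])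
          show "\<bar>psl P\<bar> \<le> u" by (simp add: u_def)
          show "\<bar>psl Q\<bar> \<le> K * u" using R' by simp
        qed (use K0 u0 in auto)
        finally show ?thesis by (simp add: w_def algebra_simps)
      qed
      show ?thesis using e1 e2 e3 expand Dw by linarith
    qed
  qed
  then show ?thesis by (simp add: K_def D_def w_def L_def u_def)
qed


theorem proposition3p9:
  fixes lam :: real
  assumes "1/6 < lam" and "lam < 5/6"
  shows "\<exists>C>0. \<forall>n x y. x \<in> {0..1} \<longrightarrow> y \<in> {0..1} \<longrightarrow> x \<notin> Eset \<longrightarrow>
           ell n x / 12 \<le> \<bar>x - y\<bar> \<longrightarrow> \<bar>x - y\<bar> \<le> ell n x / 2 \<longrightarrow>
           \<bar>Flim lam x - Flim lam y\<bar> \<le> C * (\<bar>slope_n lam n x\<bar> + 1) * \<bar>x - y\<bar>"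
proof -
  define A where "A = (1 + Kc lam) * (1 + 2 * Dc lam)"
  have A0: "0 < A" using Kc_pos[OF assms(1)] Dc_pos[of lam] assms unfolding A_def
    by (intro mult_pos_pos) auto
  show ?thesis
  proof (intro exI[of _ "12 * A"] conjI allI impI)
    show "0 < 12 * A" using A0 by simp
    fix n x y
    assume x: "x \<in> {0..1}" and y: "y \<in> {0..1}" and xE: "x \<notin> Eset"
      and d1: "ell n x / 12 \<le> \<bar>x - y\<bar>" and d2: "\<bar>x - y\<bar> \<le> ell n x / 2"
    obtain P where P: "P \<in> set (pieces lam n)" "proj P = Jm n x" using J_piece by blast
    have J: "fst (Jm n x) < x \<and> x < snd (Jm n x) \<and> snd (Jm n x) - fst (Jm n x) = ell n x"
      using J_main x xE by auto
    have P2: "pA P < x" "x < pB P" "pl P = ell n x"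
      using J P(2) by (auto simp: proj_def pl_def dest: sym)
    have sl: "slope_n lam n x = psl P" using slope_at[OF P(1) P2(1,2)] .
    have "\<bar>Flim lam x - Flim lam y\<bar> \<le> A * (pl P * (\<bar>psl P\<bar> + 1))"
      using main_bound[OF assms P(1) P2(1,2)] y d2 P2(3) by (auto simp: A_def)
    also have "\<dots> \<le> A * ((12 * \<bar>x - y\<bar>) * (\<bar>psl P\<bar> + 1))"
      using d1 P2(3) A0 by (intro mult_left_mono mult_right_mono) auto
    finally show "\<bar>Flim lam x - Flim lam y\<bar> \<le> 12 * A * (\<bar>slope_n lam n x\<bar> + 1) * \<bar>x - y\<bar>"
      by (simp add: sl algebra_simps)
  qed
qed

end
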